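(* Let $x\in W_n$ and $1\le k\le n-1$. Then $\ell(xs_k)>\ell(x)$ if and only if $\ell(txs_k)>\ell(tx)$.
   Context: $W_n$ is the Weyl group of type $B_n$ with Coxeter generators $t,s_1,\dots,s_{n-1}$ ($(ts_1)^4=1$, $(s_is_{i+1})^3=1$, other distinct pairs commute), and $\ell$ is its length function. *)

theory Defs
  imports Main
begin

text \<open>Concrete model of the Weyl group W_n of type B_n: the group of signed
permutations of {-n..-1,1..n}, realised as functions int => int, generated by
the Coxeter generators t (sign change of 1) and s_i (swap i and i+1, and
simultaneously -i and -(i+1)). Group multiplication is composition.\<close>

definition tB :: "int \<Rightarrow> int" where
  "tB = (\<lambda>j. if j = 1 then -1 else if j = -1 then 1 else j)"

definition sB :: "nat \<Rightarrow> int \<Rightarrow> int" where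
  "sB i = (\<lambda>j. if j = int i then int i + 1
              else if j = int i + 1 then int i
              else if j = - int i then - (int i + 1)
              else if j = - (int i + 1) then - int i
              else j)"

definition gensB :: "nat \<Rightarrow> (int \<Rightarrow> int) set" where
  "gensB n = {tB} \<union> {sB i | i. 1 \<le> i \<and> i \<le> n - 1}"

definition word_prod :: "(int \<Rightarrow> int) list \<Rightarrow> int \<Rightarrow> int" where
  "word_prod ws = foldr (\<circ>) ws id"

definition WB :: "nat \<Rightarrow> (int \<Rightarrow> int) set" where
  "WB n = {word_prod ws | ws. set ws \<subseteq> gensB n}"

definition lenB :: "nat \<Rightarrow> (int \<Rightarrow> int) \<Rightarrow> nat" where
  "lenB n w = (LEAST m. \<exists>ws. length ws = m \<and> set ws \<subseteq> gensB n \<and> word_prod ws = w)"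

end

theory Submission
  imports Defs
begin

definition II :: "nat \<Rightarrow> int set" where "II n = {i. 1 \<le> \<bar>i\<bar> \<and> \<bar>i\<bar> \<le> int n}"

lemma finite_II: "finite (II n)"
  by (rule finite_subset[of _ "{-int n..int n}"]) (auto simp: II_def)

definition SS :: "nat \<Rightarrow> (int \<Rightarrow> int) \<Rightarrow> int" where
  "SS n w = (\<Sum>p\<in>II n \<times> II n. if fst p < snd p \<and> w (snd p) < w (fst p) then 1 else 0)"

definition NN :: "nat \<Rightarrow> (int \<Rightarrow> int) \<Rightarrow> int" where
  "NN n w = (\<Sum>i\<in>{1..int n}. if w i < 0 then 1 else 0)"

definition MM :: "nat \<Rightarrow> (int \<Rightarrow> int) \<Rightarrow> int" where "MM n w = SS n w + NN n w"

lemma SS_change: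
  assumes gA: "\<And>a. a \<in> II n \<Longrightarrow> g a \<in> II n" and inv: "\<And>a. g (g a) = a"
    and FA: "F \<subseteq> II n \<times> II n"
    and out: "\<And>a b. a \<in> II n \<Longrightarrow> b \<in> II n \<Longrightarrow> (a,b) \<notin> F \<Longrightarrow> (g a < g b) = (a < b)"
  shows "SS n (w \<circ> g) = SS n w + (\<Sum>p\<in>F. (if g (fst p) < g (snd p) \<and> w (snd p) < w (fst p) then 1 else 0) - (if fst p < snd p \<and> w (snd p) < w (fst p) then 1 else 0))"
proof -
  let ?A = "II n \<times> II n"
  define nw where "nw p = (if g (fst p) < g (snd p) \<and> w (snd p) < w (fst p) then 1 else (0::int))" for p
  define ow where "ow p = (if fst p < snd p \<and> w (snd p) < w (fst p) then 1 else (0::int))" for p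
  have fin: "finite ?A" using finite_II by simp
  have 1: "SS n (w \<circ> g) = (\<Sum>p\<in>?A. nw p)"
    unfolding SS_def nw_def
    by (rule sum.reindex_bij_witness[where i="\<lambda>p. (g (fst p), g (snd p))" and j="\<lambda>p. (g (fst p), g (snd p))"]) (auto simp: inv gA)
  have 2: "(\<Sum>p\<in>?A. nw p - ow p) = (\<Sum>p\<in>?A. nw p) - SS n w"
    by (simp add: SS_def ow_def sum_subtractf)
  have 3: "(\<Sum>p\<in>?A. nw p - ow p) = (\<Sum>p\<in>F. nw p - ow p)"
    by (rule sum.mono_neutral_right[OF fin FA]) (auto simp: out nw_def ow_def)
  show ?thesis using 1 2 3 unfolding nw_def ow_def by simp
qed

lemma NN_change:
  assumes "F \<subseteq> {1..int n}" and "\<And>i. i \<in> {1..int n} \<Longrightarrow> i \<notin> F \<Longrightarrow> g i = i"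
  shows "NN n (w \<circ> g) = NN n w + (\<Sum>i\<in>F. (if w (g i) < 0 then 1 else 0) - (if w i < 0 then 1 else 0))"
proof -
  have "(\<Sum>i\<in>{1..int n}. (if w (g i) < 0 then 1 else 0) - (if w i < 0 then 1 else (0::int)))
     = (\<Sum>i\<in>F. (if w (g i) < 0 then 1 else 0) - (if w i < 0 then 1 else (0::int)))"
    by (rule sum.mono_neutral_right) (use assms in auto)
  moreover have "(\<Sum>i\<in>{1..int n}. (if w (g i) < 0 then 1 else 0) - (if w i < 0 then 1 else (0::int)))
     = NN n (w \<circ> g) - NN n w" by (simp add: NN_def sum_subtractf)
  ultimately show ?thesis by simp
qed

definition good :: "nat \<Rightarrow> (int \<Rightarrow> int) \<Rightarrow> bool" where
  "good n w \<longleftrightarrow> (\<forall>i. w (-i) = - w i) \<and> (\<forall>i\<in>II n. w i \<in> II n) \<and> inj_on w (II n)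
     \<and> (\<forall>i. i \<notin> II n \<longrightarrow> w i = i)"

lemma good_id: "good n id" by (auto simp: good_def)

lemma good_comp: "good n a \<Longrightarrow> good n b \<Longrightarrow> good n (a \<circ> b)"
proof -
  assume A: "good n a" and B: "good n b"
  have sub: "b ` II n \<subseteq> II n" using B unfolding good_def by blast
  have "inj_on (a \<circ> b) (II n)"
    using A B sub unfolding good_def by (meson comp_inj_on inj_on_subset)
  then show ?thesis using A B unfolding good_def by auto
qed

lemma good_tB: "1 \<le> n \<Longrightarrow> good n tB"
  unfolding good_def II_def tB_def inj_on_def by auto

lemma good_sB: "1 \<le> i \<Longrightarrow> i + 1 \<le> n \<Longrightarrow> good n (sB i)"
  unfolding good_def II_def sB_def inj_on_def by auto


lemma sB_inv: "1 \<le> k \<Longrightarrow> sB k (sB k a) = a"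
  unfolding sB_def by auto

lemma tB_inv: "tB (tB a) = a"
  unfolding tB_def by auto

lemma sB_out:
  assumes k: "1 \<le> k" and nF: "(a,b) \<notin> {(int k, int k + 1), (int k + 1, int k), (- (int k + 1), - int k), (- int k, - (int k + 1))}"
  shows "(sB k a < sB k b) = (a < b)"
proof -
  have bd: "x - 1 \<le> sB k x \<and> sB k x \<le> x + 1" for x unfolding sB_def by auto
  have adj: "sB k a' < sB k (a'+1)" if "a' \<noteq> int k" "a' \<noteq> - int k - 1" for a'
    using that k unfolding sB_def by auto
  consider "a + 3 \<le> b" | "b = a + 2" | "a = b + 2" | "b = a + 1" | "b = a" | "a = b + 1" | "b + 3 \<le> a" by linarith
  then show ?thesis
  proof cases
    case 1 then show ?thesis using bd[of a] bd[of b] by linarith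
  next
    case 2 then show ?thesis using k unfolding sB_def by auto
  next
    case 3 then show ?thesis using k unfolding sB_def by auto
  next
    case 4
    then have "a \<noteq> int k" "a \<noteq> - int k - 1" using nF by auto
    then show ?thesis using adj[of a] 4 by simp
  next
    case 5 then show ?thesis by simp
  next
    case 6
    then have "b \<noteq> int k" "b \<noteq> - int k - 1" using nF by auto
    then show ?thesis using adj[of b] 6 by simp
  next
    case 7 then show ?thesis using bd[of a] bd[of b] by linarith
  qed
qed
lemma tB_out:
  assumes "a \<noteq> 0" "b \<noteq> 0" and nF: "(a,b) \<notin> {(-1::int, 1::int), (1, -1)}"
  shows "(tB a < tB b) = (a < b)"
  using assms unfolding tB_def by auto

lemma MM_sB:
  assumes g: "good n w" and k: "1 \<le> k" "k + 1 \<le> n"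
  shows "MM n (w \<circ> sB k) = MM n w + (if w (int k) < w (int k + 1) then 2 else -2)"
proof -
  define F where "F = {(int k, int k + 1), (int k + 1, int k), (- (int k + 1), - int k), (- int k, - (int k + 1))}"
  have gs: "good n (sB k)" using good_sB k by simp
  have FA: "F \<subseteq> II n \<times> II n" using k unfolding F_def II_def by auto
  have out: "(sB k a < sB k b) = (a < b)" if "a \<in> II n" "b \<in> II n" "(a,b) \<notin> F" for a b
    using sB_out[OF k(1)] that(3) unfolding F_def by blast
  have S: "SS n (w \<circ> sB k) = SS n w + (\<Sum>p\<in>F. (if sB k (fst p) < sB k (snd p) \<and> w (snd p) < w (fst p) then 1 else 0) - (if fst p < snd p \<and> w (snd p) < w (fst p) then 1 else 0))"
    by (rule SS_change[OF _ _ FA out]) (use gs k sB_inv in \<open>auto simp: good_def\<close>)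
  have odd: "w (- i) = - w i" for i using g unfolding good_def by blast
  have kk: "int k \<in> II n" "int k + 1 \<in> II n" using k unfolding II_def by auto
  have inj: "inj_on w (II n)" using g unfolding good_def by blast
  have ne: "w (int k) \<noteq> w (int k + 1)"
  proof
    assume "w (int k) = w (int k + 1)"
    then have "int k = int k + 1" using inj kk by (meson inj_onD)
    then show False by simp
  qed
  have v1: "sB k (int k) = int k + 1" and v2: "sB k (int k + 1) = int k"
    and v3: "sB k (- (int k + 1)) = - int k" and v4: "sB k (- int k) = - (int k + 1)"
    using k unfolding sB_def by auto
  have d: "(int k, int k + 1) \<notin> {(int k + 1, int k), (- (int k + 1), - int k), (- int k, - (int k + 1))}"
    "(int k + 1, int k) \<notin> {(- (int k + 1), - int k), (- int k, - (int k + 1))}"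
    "(- (int k + 1), - int k) \<notin> {(- int k, - (int k + 1))}"
    using k by auto
  define D where "D p = (if sB k (fst p) < sB k (snd p) \<and> w (snd p) < w (fst p) then 1 else 0) - (if fst p < snd p \<and> w (snd p) < w (fst p) then 1 else (0::int))" for p
  have "sum D F = D (int k, int k + 1) + D (int k + 1, int k) + D (- (int k + 1), - int k) + D (- int k, - (int k + 1))"
    unfolding F_def using d by (simp add: sum.insert)
  also have "\<dots> = (if w (int k) < w (int k + 1) then 2 else -2)"
  proof -
    have v5: "sB k (- int k - 1) = - int k" using v3 by simp
    have o5: "w (- int k - 1) = - w (int k + 1)" using odd[of "int k + 1"] by simp
    show ?thesis unfolding D_def using ne by (simp add: v1 v2 v3 v4 v5 o5 odd)
  qed
  finally have sum: "(\<Sum>p\<in>F. (if sB k (fst p) < sB k (snd p) \<and> w (snd p) < w (fst p) then 1 else 0) - (if fst p < snd p \<and> w (snd p) < w (fst p) then 1 else (0::int)))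
     = (if w (int k) < w (int k + 1) then 2 else -2)" unfolding D_def .
  have r: "sB k i \<in> {1..int n}" if "i \<in> {1..int n}" for i
    using that k unfolding sB_def by auto
  have N: "NN n (w \<circ> sB k) = NN n w"
    unfolding NN_def
    by (rule sum.reindex_bij_witness[where i="sB k" and j="sB k"]) (use k sB_inv r in auto)
  show ?thesis using S sum N unfolding MM_def by simp
qed

lemma MM_tB:
  assumes g: "good n w" and n: "1 \<le> n"
  shows "MM n (w \<circ> tB) = MM n w + (if 0 < w 1 then 2 else -2)"
proof -
  define F where "F = {(-1::int, 1::int), (1, -1)}"
  have gs: "good n tB" using good_tB n by simp
  have FA: "F \<subseteq> II n \<times> II n" using n unfolding F_def II_def by auto
  have out: "(tB a < tB b) = (a < b)" if "a \<in> II n" "b \<in> II n" "(a,b) \<notin> F" for a b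
    using tB_out that unfolding F_def II_def by auto
  have S: "SS n (w \<circ> tB) = SS n w + (\<Sum>p\<in>F. (if tB (fst p) < tB (snd p) \<and> w (snd p) < w (fst p) then 1 else 0) - (if fst p < snd p \<and> w (snd p) < w (fst p) then 1 else 0))"
    by (rule SS_change[OF _ _ FA out]) (use gs tB_inv in \<open>auto simp: good_def\<close>)
  have odd: "w (- i) = - w i" for i using g unfolding good_def by blast
  have one: "(1::int) \<in> II n" using n unfolding II_def by auto
  have w1: "w 1 \<in> II n" using g one unfolding good_def by blast
  have ne: "w 1 \<noteq> 0" using w1 unfolding II_def by auto
  have sum: "(\<Sum>p\<in>F. (if tB (fst p) < tB (snd p) \<and> w (snd p) < w (fst p) then 1 else 0) - (if fst p < snd p \<and> w (snd p) < w (fst p) then 1 else (0::int)))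
     = (if 0 < w 1 then 1 else -1)"
    using ne unfolding F_def by (simp add: tB_def odd)
  have N: "NN n (w \<circ> tB) = NN n w + (\<Sum>i\<in>{1}. (if w (tB i) < 0 then 1 else 0) - (if w i < 0 then 1 else 0))"
    by (rule NN_change) (use n in \<open>auto simp: tB_def\<close>)
  have N2: "(\<Sum>i\<in>{1::int}. (if w (tB i) < 0 then 1 else 0) - (if w i < 0 then 1 else (0::int))) = (if 0 < w 1 then 1 else -1)"
    using ne by (simp add: tB_def odd)
  show ?thesis using S sum N N2 unfolding MM_def by simp
qed


lemma foldr_comp_gen: "foldr (\<circ>) ws g = foldr (\<circ>) ws id \<circ> g"
  by (induction ws) (auto simp: comp_assoc)

lemma word_snoc: "word_prod (ws @ [g]) = word_prod ws \<circ> g"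
  unfolding word_prod_def by (simp add: foldr_comp_gen[of ws g])

lemma word_nil: "word_prod [] = id"
  unfolding word_prod_def by simp

lemma word_cons: "word_prod (g # ws) = g \<circ> word_prod ws"
  unfolding word_prod_def by simp

lemma gen_good: "g \<in> gensB n \<Longrightarrow> 1 \<le> n \<Longrightarrow> good n g"
  unfolding gensB_def using good_tB good_sB by auto

lemma gen_inv: "g \<in> gensB n \<Longrightarrow> g \<circ> g = id"
  unfolding gensB_def using tB_inv sB_inv by (auto simp: fun_eq_iff)

lemma word_good: "set ws \<subseteq> gensB n \<Longrightarrow> 1 \<le> n \<Longrightarrow> good n (word_prod ws)"
proof (induction ws)
  case Nil then show ?case by (simp only: word_nil good_id)
next
  case (Cons g ws) then show ?case unfolding word_cons by (intro good_comp) (auto intro: gen_good)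
qed

lemma WB_good: "w \<in> WB n \<Longrightarrow> 1 \<le> n \<Longrightarrow> good n w"
  unfolding WB_def using word_good by blast

lemma MM_gen:
  assumes "g \<in> gensB n" "good n w" "1 \<le> n"
  shows "MM n (w \<circ> g) = MM n w + 2 \<or> MM n (w \<circ> g) = MM n w - 2"
proof -
  consider "g = tB" | i where "g = sB i" "1 \<le> i" "i \<le> n - 1" using assms(1) unfolding gensB_def by blast
  then show ?thesis
  proof cases
    case 1 then show ?thesis using MM_tB[OF assms(2,3)] by auto
  next
    case 2 then show ?thesis using MM_sB[OF assms(2), of i] by auto
  qed
qed

lemma MM_nonneg: "0 \<le> MM n w"
  unfolding MM_def SS_def NN_def by (intro add_nonneg_nonneg sum_nonneg) auto

lemma MM_id: "MM n id = 0"
  unfolding MM_def SS_def NN_def by (auto intro!: sum.neutral)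

lemma MM_le: "set ws \<subseteq> gensB n \<Longrightarrow> 1 \<le> n \<Longrightarrow> MM n (word_prod ws) \<le> 2 * int (length ws)"
proof (induction ws rule: rev_induct)
  case Nil then show ?case by (simp only: word_nil MM_id)
next
  case (snoc g ws)
  then have "good n (word_prod ws)" "g \<in> gensB n" using word_good by auto
  then have "MM n (word_prod ws \<circ> g) \<le> MM n (word_prod ws) + 2" using MM_gen[of g n "word_prod ws"] snoc by auto
  moreover have "MM n (word_prod ws) \<le> 2 * int (length ws)" using snoc by simp
  moreover have "int (length (ws @ [g])) = int (length ws) + 1" by simp
  ultimately show ?case unfolding word_snoc by linarith
qed

lemma descent:
  assumes g: "good n w" and n: "1 \<le> n" and ni: "w \<noteq> id"
  shows "w 1 < 0 \<or> (\<exists>k. 1 \<le> k \<and> k + 1 \<le> n \<and> w (int k + 1) < w (int k))"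
proof (rule ccontr)
  assume "\<not> ?thesis"
  then have p: "0 \<le> w 1" and inc0: "\<And>k. 1 \<le> k \<Longrightarrow> k + 1 \<le> n \<Longrightarrow> w (int k) \<le> w (int k + 1)" by auto
  have odd: "w (- i) = - w i" for i using g unfolding good_def by blast
  have inj: "inj_on w (II n)" using g unfolding good_def by blast
  have mapsto: "w i \<in> II n" if "i \<in> II n" for i using g that unfolding good_def by blast
  have fixo: "w i = i" if "i \<notin> II n" for i using g that unfolding good_def by blast
  have inc: "w (int k) < w (int k + 1)" if "1 \<le> k" "k + 1 \<le> n" for k
  proof -
    have "int k \<in> II n" "int k + 1 \<in> II n" using that unfolding II_def by auto
    moreover have "int k \<noteq> int k + 1" by simp
    ultimately have "w (int k) \<noteq> w (int k + 1)" using inj by (meson inj_onD)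
    then show ?thesis using inc0[OF that] by simp
  qed
  have one: "(1::int) \<in> II n" using n unfolding II_def by auto
  have w1: "1 \<le> w 1" using mapsto[OF one] p unfolding II_def by auto
  have up: "int m \<le> w (int m)" if "1 \<le> m" "m \<le> n" for m
    using that
  proof (induction m)
    case 0 then show ?case by simp
  next
    case (Suc m)
    show ?case
    proof (cases "m = 0")
      case True then show ?thesis using w1 by simp
    next
      case False
      then have "int m \<le> w (int m)" using Suc by simp
      moreover have "w (int m) < w (int m + 1)" using inc[of m] False Suc.prems by simp
      moreover have "int (Suc m) = int m + 1" by simp
      ultimately show ?thesis by (simp only:; linarith)
    qed
  qed
  have wn: "w (int n) \<le> int n" using mapsto[of "int n"] n unfolding II_def by auto
  have down: "w (int n - int d) \<le> int n - int d" if "d < n" for d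
    using that
  proof (induction d)
    case 0 then show ?case using wn by simp
  next
    case (Suc d)
    then have h: "w (int n - int d) \<le> int n - int d" by simp
    have "w (int (n - Suc d)) < w (int (n - Suc d) + 1)" using inc[of "n - Suc d"] Suc.prems by simp
    moreover have "int (n - Suc d) = int n - int (Suc d)" "int (n - Suc d) + 1 = int n - int d" using Suc.prems by auto
    ultimately have "w (int n - int (Suc d)) < w (int n - int d)" by (simp only:)
    moreover have "int (Suc d) = int d + 1" by simp
    ultimately show ?case using h by (simp only:; linarith)
  qed
  have pos: "w i = i" if "1 \<le> i" "i \<le> int n" for i
  proof -
    have "0 \<le> i" using that by simp
    then obtain m where m: "i = int m" using nonneg_int_cases by blast
    have "int m \<le> w (int m)" using up[of m] m that by simp
    moreover have "w (int n - int (n - m)) \<le> int n - int (n - m)" using down[of "n - m"] m that by simp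
    moreover have "int n - int (n - m) = int m" using m that by simp
    ultimately show ?thesis using m by simp
  qed
  have "w i = i" for i
  proof (cases "i \<in> II n")
    case True
    show ?thesis
    proof (cases "0 < i")
      case True then show ?thesis using pos \<open>i \<in> II n\<close> unfolding II_def by auto
    next
      case False
      then have "w (- i) = - i" using pos[of "- i"] \<open>i \<in> II n\<close> unfolding II_def by auto
      then show ?thesis using odd[of i] by simp
    qed
  next
    case False then show ?thesis using fixo by simp
  qed
  then have "w = id" by (simp add: fun_eq_iff)
  then show False using ni by simp
qed

lemma tB_gen: "tB \<in> gensB n" unfolding gensB_def by simp
lemma sB_gen: "1 \<le> k \<Longrightarrow> k + 1 \<le> n \<Longrightarrow> sB k \<in> gensB n" unfolding gensB_def by auto

lemma exists_word:
  assumes "1 \<le> n" "good n w"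
  shows "\<exists>ws. set ws \<subseteq> gensB n \<and> word_prod ws = w \<and> 2 * int (length ws) = MM n w"
  using assms(2)
proof (induction "nat (MM n w)" arbitrary: w rule: less_induct)
  case less
  show ?case
  proof (cases "w = id")
    case True then show ?thesis by (intro exI[of _ "[]"]) (simp only: word_nil MM_id, simp)
  next
    case False
    have "\<exists>g\<in>gensB n. MM n (w \<circ> g) = MM n w - 2"
    proof -
      from descent[OF less.prems assms(1) False] show ?thesis
      proof
        assume "w 1 < 0"
        then show ?thesis using MM_tB[OF less.prems assms(1)] tB_gen by auto
      next
        assume "\<exists>k. 1 \<le> k \<and> k + 1 \<le> n \<and> w (int k + 1) < w (int k)"
        then obtain k where k: "1 \<le> k" "k + 1 \<le> n" "w (int k + 1) < w (int k)" by blast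
        then show ?thesis using MM_sB[OF less.prems k(1,2)] sB_gen[OF k(1,2)] by (intro bexI[of _ "sB k"]) auto
      qed
    qed
    then obtain g where g: "g \<in> gensB n" "MM n (w \<circ> g) = MM n w - 2" by blast
    have gw: "good n (w \<circ> g)" using good_comp less.prems gen_good[OF g(1) assms(1)] by blast
    have "0 \<le> MM n (w \<circ> g)" by (rule MM_nonneg)
    then have lt: "nat (MM n (w \<circ> g)) < nat (MM n w)" using g(2) by simp
    obtain ws where ws: "set ws \<subseteq> gensB n" "word_prod ws = w \<circ> g" "2 * int (length ws) = MM n (w \<circ> g)"
      using less.hyps[OF lt gw] by blast
    have "word_prod (ws @ [g]) = w \<circ> (g \<circ> g)" using ws(2) by (simp add: word_snoc comp_assoc)
    then have "word_prod (ws @ [g]) = w" using gen_inv[OF g(1)] by simp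
    then show ?thesis using ws g by (intro exI[of _ "ws @ [g]"]) auto
  qed
qed

lemma lenB_MM:
  assumes n: "1 \<le> n" and w: "w \<in> WB n"
  shows "2 * int (lenB n w) = MM n w"
proof -
  obtain ws0 where ws0: "set ws0 \<subseteq> gensB n" "word_prod ws0 = w" "2 * int (length ws0) = MM n w"
    using exists_word[OF n WB_good[OF w n]] by blast
  define P where "P m = (\<exists>ws. length ws = m \<and> set ws \<subseteq> gensB n \<and> word_prod ws = w)" for m
  have P0: "P (length ws0)" unfolding P_def using ws0 by blast
  have L: "lenB n w = (LEAST m. P m)" unfolding lenB_def P_def by simp
  have le: "lenB n w \<le> length ws0" unfolding L by (rule Least_le[of P, OF P0])
  have "P (lenB n w)" unfolding L by (rule LeastI[of P, OF P0])
  then obtain ws1 where ws1: "length ws1 = lenB n w" "set ws1 \<subseteq> gensB n" "word_prod ws1 = w" unfolding P_def by blast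
  have "MM n w \<le> 2 * int (lenB n w)" using MM_le[OF ws1(2) n] ws1 by simp
  then show ?thesis using le ws0(3) by linarith
qed

lemma WB_snoc: "w \<in> WB n \<Longrightarrow> g \<in> gensB n \<Longrightarrow> w \<circ> g \<in> WB n"
proof -
  assume "w \<in> WB n" "g \<in> gensB n"
  then obtain ws where "set ws \<subseteq> gensB n" "w = word_prod ws" unfolding WB_def by blast
  then have "set (ws @ [g]) \<subseteq> gensB n" "w \<circ> g = word_prod (ws @ [g])" using \<open>g \<in> gensB n\<close> by (auto simp: word_snoc)
  then show ?thesis unfolding WB_def by blast
qed

lemma WB_cons: "w \<in> WB n \<Longrightarrow> g \<in> gensB n \<Longrightarrow> g \<circ> w \<in> WB n"
proof -
  assume "w \<in> WB n" "g \<in> gensB n"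
  then obtain ws where "set ws \<subseteq> gensB n" "w = word_prod ws" unfolding WB_def by blast
  then have "set (g # ws) \<subseteq> gensB n" "g \<circ> w = word_prod (g # ws)" using \<open>g \<in> gensB n\<close> by (auto simp: word_cons)
  then show ?thesis unfolding WB_def by blast
qed

theorem proposition2p12:
  fixes n k :: nat and x :: "int \<Rightarrow> int"
  assumes "x \<in> WB n" and "1 \<le> k" and "k \<le> n - 1"
  shows "lenB n (x \<circ> sB k) > lenB n x \<longleftrightarrow> lenB n (tB \<circ> x \<circ> sB k) > lenB n (tB \<circ> x)"
proof -
  have n: "1 \<le> n" "k + 1 \<le> n" using assms by auto
  have sg: "sB k \<in> gensB n" using sB_gen[OF assms(2) n(2)] .
  have x1: "x \<circ> sB k \<in> WB n" using WB_snoc[OF assms(1) sg] .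
  have tx: "tB \<circ> x \<in> WB n" using WB_cons[OF assms(1) tB_gen] .
  have tx1: "tB \<circ> x \<circ> sB k \<in> WB n" using WB_snoc[OF tx sg] .
  have gx: "good n x" using WB_good[OF assms(1) n(1)] .
  have gtx: "good n (tB \<circ> x)" using WB_good[OF tx n(1)] .
  have e1: "lenB n (x \<circ> sB k) > lenB n x \<longleftrightarrow> x (int k) < x (int k + 1)"
    using lenB_MM[OF n(1) x1] lenB_MM[OF n(1) assms(1)] MM_sB[OF gx assms(2) n(2)] by (auto split: if_split_asm)
  have e2: "lenB n (tB \<circ> x \<circ> sB k) > lenB n (tB \<circ> x) \<longleftrightarrow> tB (x (int k)) < tB (x (int k + 1))"
    using lenB_MM[OF n(1) tx1] lenB_MM[OF n(1) tx] MM_sB[OF gtx assms(2) n(2)] by (auto split: if_split_asm)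
  have kk: "int k \<in> II n" "int k + 1 \<in> II n" "- int k \<in> II n" using n assms(2) unfolding II_def by auto
  have inj: "inj_on x (II n)" using gx unfolding good_def by blast
  have odd: "x (- i) = - x i" for i using gx unfolding good_def by blast
  have a: "x (int k) \<in> II n" "x (int k + 1) \<in> II n" using gx kk unfolding good_def by auto
  have ne1: "x (int k) \<noteq> x (int k + 1)"
  proof
    assume "x (int k) = x (int k + 1)"
    then have "int k = int k + 1" using inj kk by (meson inj_onD)
    then show False by simp
  qed
  have ne2: "x (int k + 1) \<noteq> - x (int k)"
  proof
    assume "x (int k + 1) = - x (int k)"
    then have "x (int k + 1) = x (- int k)" using odd by simp
    then have "int k + 1 = - int k" using inj kk by (meson inj_onD)
    then show False by simp
  qed
  have "tB (x (int k)) < tB (x (int k + 1)) \<longleftrightarrow> x (int k) < x (int k + 1)"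
    using a ne1 ne2 unfolding tB_def II_def by auto
  then show ?thesis using e1 e2 by simp
qed

end
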